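(* Let $F:\mathbb{P}(n)\to\mathbb{P}(n)$, $F(\Sigma)=I*\Sigma$. Then the maximum and minimum eigenvalues of $F(\Sigma)$ are monotone in $\Sigma$: if $\Sigma_1,\Sigma_2\in\mathbb{P}(n)$ with $\Sigma_1\preceq\Sigma_2$, then $\lambda_{\max}(I*\Sigma_1)\le\lambda_{\max}(I*\Sigma_2)$ and $\lambda_{\min}(I*\Sigma_1)\le\lambda_{\min}(I*\Sigma_2)$.
   Context: $\mathbb{P}(n)$ denotes the cone of $n\times n$ positive definite Hermitian matrices and $\preceq$ is the Löwner order ($A\preceq B$ iff $B-A$ is positive semidefinite). For $A,B\in\mathbb{P}(n)$, with $\lambda_{\max},\lambda_{\min}$ the largest and smallest eigenvalues of $BA^{-1}$, define $A*B=\frac{1}{\sqrt{\lambda_{\min}}+\sqrt{\lambda_{\max}}}\left(B+\sqrt{\lambda_{\min}\lambda_{\max}}\,A\right)$. *)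

theory Defs
  imports "HOL-Analysis.Analysis"
begin

text \<open>Square complex matrices of a fixed (arbitrary, finite) dimension n = CARD('n).\<close>

definition adjoint_mat :: "complex^'n^'n \<Rightarrow> complex^'n^'n" where
  "adjoint_mat A = (\<chi> i j. cnj (A $ j $ i))"

definition hermitian_mat :: "complex^'n^'n \<Rightarrow> bool" where
  "hermitian_mat A \<longleftrightarrow> adjoint_mat A = A"

definition qform :: "complex^'n^'n \<Rightarrow> complex^'n \<Rightarrow> complex" where
  "qform A x = (\<Sum>i\<in>UNIV. cnj (x $ i) * (A *v x) $ i)"

definition pos_def_mat :: "complex^'n^'n \<Rightarrow> bool" where
  "pos_def_mat A \<longleftrightarrow> hermitian_mat A \<and> (\<forall>x. x \<noteq> 0 \<longrightarrow> Re (qform A x) > 0)"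

definition pos_semidef_mat :: "complex^'n^'n \<Rightarrow> bool" where
  "pos_semidef_mat A \<longleftrightarrow> hermitian_mat A \<and> (\<forall>x. Re (qform A x) \<ge> 0)"

definition loewner_le :: "complex^'n^'n \<Rightarrow> complex^'n^'n \<Rightarrow> bool" where
  "loewner_le A B \<longleftrightarrow> pos_semidef_mat (B - A)"

text \<open>Real eigenvalues of a complex matrix (all eigenvalues of the matrices
  considered here, Hermitian matrices and B A^{-1} with A, B positive definite, are real).\<close>
definition real_eigenvalues :: "complex^'n^'n \<Rightarrow> real set" where
  "real_eigenvalues M = {l. \<exists>v. v \<noteq> 0 \<and> M *v v = complex_of_real l *s v}"

definition lambda_max :: "complex^'n^'n \<Rightarrow> real" where
  "lambda_max M = Max (real_eigenvalues M)"

definition lambda_min :: "complex^'n^'n \<Rightarrow> real" where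
  "lambda_min M = Min (real_eigenvalues M)"

definition star_op :: "complex^'n^'n \<Rightarrow> complex^'n^'n \<Rightarrow> complex^'n^'n" where
  "star_op A B =
    (let M = B ** matrix_inv A; lmax = lambda_max M; lmin = lambda_min M
     in (1 / (sqrt lmin + sqrt lmax)) *\<^sub>R (B + sqrt (lmin * lmax) *\<^sub>R A))"

end

theory Submission
  imports Defs
begin

definition hip :: "complex^'n \<Rightarrow> complex^'n \<Rightarrow> complex" where
  "hip x y = (\<Sum>i\<in>UNIV. cnj (x $ i) * y $ i)"

lemma qform_hip: "qform A x = hip x (A *v x)"
  by (simp add: qform_def hip_def)

lemma matrix_inv_id: "matrix_inv (mat 1 :: complex^'n^'n) = mat 1"
proof -
  have "\<exists>A'::complex^'n^'n. mat 1 ** A' = mat 1 \<and> A' ** mat 1 = mat 1" by (intro exI[of _ "mat 1"]) simp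
  then have "mat 1 ** matrix_inv (mat 1 :: complex^'n^'n) = mat 1"
    unfolding matrix_inv_def by (rule someI_ex[where P="\<lambda>A'. mat 1 ** A' = mat 1 \<and> A' ** mat 1 = mat 1", THEN conjunct1])
  then show ?thesis by simp
qed

lemma hip_self: "hip x x = of_real ((norm x)^2)"
proof -
  have "(norm x)^2 = (\<Sum>i\<in>UNIV. (norm (x$i))^2)"
    by (simp add: power2_norm_eq_inner inner_vec_def)
  then have "of_real ((norm x)^2) = (\<Sum>i\<in>UNIV. (of_real (norm (x$i)))^2 :: complex)"
    by simp
  also have "\<dots> = (\<Sum>i\<in>UNIV. cnj (x$i) * x$i)"
    by (rule sum.cong) (auto simp: complex_norm_square[symmetric] mult.commute)
  finally show ?thesis unfolding hip_def by simp
qed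

lemma hip_herm:
  assumes "hermitian_mat A"
  shows "hip x (A *v y) = cnj (hip y (A *v x))"
proof -
  have A: "\<And>i j. cnj (A $ j $ i) = A $ i $ j" using assms
    unfolding hermitian_mat_def adjoint_mat_def by (metis vec_lambda_beta vec_eq_iff)
  have "hip x (A *v y) = (\<Sum>i\<in>UNIV. \<Sum>j\<in>UNIV. cnj (x$i) * A$i$j * y$j)"
    by (simp add: hip_def matrix_vector_mult_def sum_distrib_left mult.assoc)
  also have "\<dots> = (\<Sum>j\<in>UNIV. \<Sum>i\<in>UNIV. cnj (x$i) * A$i$j * y$j)"
    by (rule sum.swap)
  also have "\<dots> = cnj (hip y (A *v x))"
    by (simp add: hip_def matrix_vector_mult_def sum_distrib_left A mult.commute mult.left_commute)
  finally show ?thesis .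
qed

lemma hip_add_right: "hip x (y + z) = hip x y + hip x z"
  by (simp add: hip_def sum.distrib distrib_left)
lemma hip_add_left: "hip (x + y) z = hip x z + hip y z"
  by (simp add: hip_def sum.distrib distrib_right)
lemma hip_scale_right: "hip x (c *s y) = c * hip x y"
  by (simp add: hip_def sum_distrib_left mult.left_commute)
lemma hip_scale_left: "hip (c *s x) y = cnj c * hip x y"
  by (simp add: hip_def sum_distrib_left mult.assoc)
lemma mv_add: "(A::complex^'n^'n) *v (x + y) = A *v x + A *v y"
  by (simp add: matrix_vector_right_distrib)
lemma mv_scale: "(A::complex^'n^'n) *v (c *s y) = c *s (A *v y)"
  by (simp add: vec_eq_iff matrix_vector_mult_def sum_distrib_left mult.left_commute)

lemma qform_expand:
  "qform A (x + c *s y) = qform A x + c * hip x (A *v y) + cnj c * hip y (A *v x) + cnj c * c * qform A y"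
  by (simp add: qform_hip mv_add mv_scale hip_add_left hip_add_right hip_scale_left hip_scale_right algebra_simps)

lemma psd_zero:
  assumes H: "hermitian_mat B" and P: "\<And>z. Re (qform B z) \<ge> 0" and Z: "Re (qform B x) = 0"
  shows "B *v x = 0"
proof -
  define y where "y = B *v x"
  define N where "N = (norm y)^2"
  define Q where "Q = Re (qform B y)"
  have Q0: "Q \<ge> 0" using P Q_def by simp
  have key: "0 \<le> - 2 * s * N + s^2 * Q" for s :: real
  proof -
    have h1: "hip y (B *v x) = of_real N" by (simp add: y_def N_def hip_self)
    have h2: "hip x (B *v y) = of_real N" using hip_herm[OF H, of x y] h1 by simp
    have "Re (qform B (x + of_real (-s) *s y)) = - 2 * s * N + s^2 * Q"
      unfolding qform_expand h1 h2 using Z by (simp add: Q_def power2_eq_square)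
    then show ?thesis using P by metis
  qed
  have "N \<le> 0"
  proof (rule ccontr)
    assume "\<not> N \<le> 0"
    then have Np: "N > 0" by simp
    define s where "s = N / (Q + 1)"
    have sp: "s > 0" using Np Q0 by (simp add: s_def)
    have "2 * N \<le> s * Q" using key[of s] sp by (simp add: power2_eq_square algebra_simps)
    also have "s * Q < N" using Np Q0 by (simp add: s_def field_simps)
    finally show False using Np by simp
  qed
  then have "norm y = 0" using N_def by simp
  then show ?thesis using y_def by simp
qed

lemma mat_mv: "(mat c :: complex^'n^'n) *v x = c *s x"
proof -
  have "(\<Sum>j\<in>UNIV. (if i = j then c else 0) * x $ j) = c * x $ i" for i
  proof -
    have "(\<Sum>j\<in>UNIV. (if i = j then c else 0) * x $ j) = (\<Sum>j\<in>UNIV. if i = j then c * x $ j else 0)"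
      by (rule sum.cong) auto
    then show ?thesis by simp
  qed
  then show ?thesis by (simp add: vec_eq_iff matrix_vector_mult_def mat_def)
qed

lemma qform_diff: "qform (A - B) x = qform A x - qform B x"
  by (simp add: qform_def matrix_vector_mult_diff_rdistrib sum_subtractf right_diff_distrib)

lemma qform_mat: "qform (mat c) x = c * of_real ((norm x)^2)"
  by (simp add: qform_hip mat_mv hip_scale_right hip_self)

lemma qform_scale: "qform A (c *s x) = cnj c * c * qform A x"
  by (simp add: qform_hip mv_scale hip_scale_right hip_scale_left mult.assoc)

lemma ofreal_smult: "(of_real r :: complex) *s x = r *\<^sub>R x"
  by (simp add: vec_eq_iff) (simp add: scaleR_conv_of_real)

lemma herm_diff: "hermitian_mat A \<Longrightarrow> hermitian_mat B \<Longrightarrow> hermitian_mat (A - B)"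
  by (simp add: hermitian_mat_def adjoint_mat_def vec_eq_iff)

lemma herm_mat_real: "hermitian_mat (mat (of_real r) :: complex^'n^'n)"
  by (simp add: hermitian_mat_def adjoint_mat_def vec_eq_iff mat_def)

lemma herm_uminus: "hermitian_mat A \<Longrightarrow> hermitian_mat (- A)"
  by (simp add: hermitian_mat_def adjoint_mat_def vec_eq_iff)

lemma cont_qform: "continuous_on S (\<lambda>x. Re (qform A x))"
  unfolding qform_def matrix_vector_mult_def
  by (intro continuous_intros)

lemma sphere_ne: "sphere (0::complex^'n) 1 \<noteq> {}"
  by simp

lemma rayleigh_unit:
  assumes "x \<noteq> 0"
  shows "\<exists>u. norm u = 1 \<and> Re (qform A u) * (norm x)^2 = Re (qform A x)"
proof -
  define u where "u = (of_real (1 / norm x) :: complex) *s x"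
  have "norm u = 1" using assms unfolding u_def ofreal_smult by simp
  moreover have "Re (qform A u) * (norm x)^2 = Re (qform A x)"
    using assms by (simp add: u_def qform_scale power2_eq_square)
  ultimately show ?thesis by blast
qed

lemma eig_max:
  assumes H: "hermitian_mat A"
  shows "\<exists>v. norm v = 1 \<and> A *v v = of_real (Re (qform A v)) *s v \<and>
             (\<forall>x. norm x = 1 \<longrightarrow> Re (qform A x) \<le> Re (qform A v))"
proof -
  obtain v where v: "v \<in> sphere 0 1" and vmax: "\<forall>y\<in>sphere 0 1. Re (qform A y) \<le> Re (qform A v)"
    using continuous_attains_sup[OF compact_sphere sphere_ne cont_qform] by blast
  define m where "m = Re (qform A v)"
  define B where "B = mat (of_real m) - A"
  have HB: "hermitian_mat B" unfolding B_def by (intro herm_diff herm_mat_real H)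
  have reB: "Re (qform B x) = m * (norm x)^2 - Re (qform A x)" for x
    by (simp add: B_def qform_diff qform_mat)
  have PB: "Re (qform B x) \<ge> 0" for x
  proof (cases "x = 0")
    case True then show ?thesis by (simp add: qform_def)
  next
    case False
    then obtain u where u: "norm u = 1" "Re (qform A u) * (norm x)^2 = Re (qform A x)"
      using rayleigh_unit by blast
    have "Re (qform A u) \<le> m" using vmax u(1) m_def by simp
    then have "Re (qform A x) \<le> m * (norm x)^2" using u(2)
      by (metis mult_right_mono zero_le_power2)
    then show ?thesis using reB by simp
  qed
  have nv: "norm v = 1" using v by simp
  have "Re (qform B v) = 0" using reB nv m_def by simp
  then have "B *v v = 0" using psd_zero[OF HB PB] by blast
  then have "A *v v = of_real m *s v"
    by (simp add: B_def matrix_vector_mult_diff_rdistrib mat_mv)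
  then show ?thesis using nv vmax m_def by auto
qed

lemma inner_hip: "inner x y = Re (hip x y)"
  by (simp add: inner_vec_def hip_def inner_complex_def Re_sum)

lemma hip_cnj: "cnj (hip x y) = hip y x"
  by (simp add: hip_def mult.commute)

lemma eig_unit:
  assumes "l \<in> real_eigenvalues A"
  shows "\<exists>u. norm u = 1 \<and> Re (qform A u) = l"
proof -
  obtain v where v: "v \<noteq> 0" "A *v v = of_real l *s v"
    using assms unfolding real_eigenvalues_def by blast
  have q: "Re (qform A v) = l * (norm v)^2"
    by (simp add: qform_hip v(2) hip_scale_right hip_self)
  obtain u where u: "norm u = 1" "Re (qform A u) * (norm v)^2 = Re (qform A v)"
    using rayleigh_unit[OF v(1)] by blast
  have "Re (qform A u) = l" using u(2) q v(1) by simp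
  then show ?thesis using u(1) by blast
qed

lemma eig_finite:
  assumes H: "hermitian_mat A"
  shows "finite (real_eigenvalues A)"
proof -
  define E where "E = real_eigenvalues A"
  define f where "f l = (SOME v. v \<noteq> 0 \<and> A *v v = of_real l *s v)" for l
  have fE: "f l \<noteq> 0 \<and> A *v f l = of_real l *s f l" if "l \<in> E" for l
    using that unfolding E_def real_eigenvalues_def f_def by (metis (mono_tags, lifting) someI_ex mem_Collect_eq)
  have inj: "inj_on f E"
  proof (rule inj_onI)
    fix l k assume "l \<in> E" "k \<in> E" "f l = f k"
    then have "of_real l *s f l = of_real k *s f l" "f l \<noteq> 0" using fE by metis+
    moreover obtain i where "f l $ i \<noteq> 0" using \<open>f l \<noteq> 0\<close> by (metis vec_eq_iff zero_index)
    ultimately have "(of_real l :: complex) = of_real k"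
      by (metis vector_smult_component mult_cancel_right)
    then show "l = k" by simp
  qed
  have orth: "pairwise orthogonal (f ` E)"
  proof (clarsimp simp: pairwise_def)
    fix l k assume l: "l \<in> E" and k: "k \<in> E" and ne: "f l \<noteq> f k"
    have "l \<noteq> k" using ne by auto
    have e1: "hip (f l) (A *v f k) = of_real k * hip (f l) (f k)"
      using fE[OF k] by (simp add: hip_scale_right)
    have e2: "hip (f k) (A *v f l) = of_real l * hip (f k) (f l)"
      using fE[OF l] by (simp add: hip_scale_right)
    have "of_real k * hip (f l) (f k) = of_real l * hip (f l) (f k)"
      using hip_herm[OF H, of "f l" "f k"] e1 e2 by (simp add: hip_cnj)
    then have "hip (f l) (f k) = 0" using \<open>l \<noteq> k\<close> by simp
    then show "orthogonal (f l) (f k)" by (simp add: orthogonal_def inner_hip)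
  qed
  have "0 \<notin> f ` E" using fE by auto
  then have "independent (f ` E)" using pairwise_orthogonal_independent orth by blast
  then have "finite (f ` E)" using independent_bound by blast
  then show ?thesis using finite_imageD inj E_def by blast
qed

lemma qform_uminus: "qform (- A) x = - qform A x"
  by (simp add: qform_def matrix_vector_mult_def sum_negf)

lemma eig_qform_le:
  assumes "l \<in> real_eigenvalues A" "\<And>x. norm x = 1 \<Longrightarrow> Re (qform A x) \<le> m"
  shows "l \<le> m"
  using eig_unit[OF assms(1)] assms(2) by blast

lemma lmax_props:
  assumes H: "hermitian_mat A"
  shows "lambda_max A \<in> real_eigenvalues A \<and> (\<forall>x. norm x = 1 \<longrightarrow> Re (qform A x) \<le> lambda_max A)"
proof -
  obtain v where v: "norm v = 1" "A *v v = of_real (Re (qform A v)) *s v"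
    "\<forall>x. norm x = 1 \<longrightarrow> Re (qform A x) \<le> Re (qform A v)"
    using eig_max[OF H] by blast
  have mem: "Re (qform A v) \<in> real_eigenvalues A"
    unfolding real_eigenvalues_def using v(1,2) by (auto intro!: exI[of _ v])
  have "lambda_max A = Re (qform A v)"
    unfolding lambda_max_def
  proof (rule Max_eqI[OF eig_finite[OF H] _ mem])
    fix l assume "l \<in> real_eigenvalues A"
    then show "l \<le> Re (qform A v)" using eig_qform_le v(3) by blast
  qed
  then show ?thesis using mem v(3) by simp
qed

lemma lmin_props:
  assumes H: "hermitian_mat A"
  shows "lambda_min A \<in> real_eigenvalues A \<and> (\<forall>x. norm x = 1 \<longrightarrow> lambda_min A \<le> Re (qform A x))"
proof -
  obtain v where v: "norm v = 1" "(- A) *v v = of_real (Re (qform (- A) v)) *s v"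
    "\<forall>x. norm x = 1 \<longrightarrow> Re (qform (- A) x) \<le> Re (qform (- A) v)"
    using eig_max[OF herm_uminus[OF H]] by blast
  define m where "m = Re (qform A v)"
  have Av: "A *v v = of_real m *s v"
  proof -
    have "- (A *v v) = - (of_real m *s v)" using v(2)
      by (simp add: m_def qform_uminus vec_eq_iff matrix_vector_mult_def sum_negf)
    then show ?thesis by simp
  qed
  have le: "\<forall>x. norm x = 1 \<longrightarrow> m \<le> Re (qform A x)" using v(3) by (simp add: m_def qform_uminus)
  have mem: "m \<in> real_eigenvalues A"
    unfolding real_eigenvalues_def using v(1) Av by (auto intro!: exI[of _ v])
  have "lambda_min A = m"
    unfolding lambda_min_def
  proof (rule Min_eqI[OF eig_finite[OF H] _ mem])
    fix l assume "l \<in> real_eigenvalues A"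
    then show "m \<le> l" using eig_unit le by blast
  qed
  then show ?thesis using mem le by simp
qed

lemma posdef_eig_pos:
  assumes "pos_def_mat A" "l \<in> real_eigenvalues A"
  shows "l > 0"
proof -
  obtain u where "norm u = 1" "Re (qform A u) = l" using eig_unit assms(2) by blast
  then show ?thesis using assms(1) unfolding pos_def_mat_def by (metis norm_zero zero_neq_one)
qed

lemma mv_scaleR: "(r *\<^sub>R M :: complex^'n^'n) *v v = of_real r *s (M *v v)"
  by (simp add: vec_eq_iff matrix_vector_mult_def sum_distrib_left) (simp add: scaleR_conv_of_real mult.assoc)

lemma eig_affine:
  assumes "c > 0"
  shows "real_eigenvalues (c *\<^sub>R (S + d *\<^sub>R mat 1) :: complex^'n^'n) = (\<lambda>l. c * (l + d)) ` real_eigenvalues S"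
proof -
  have mv: "(c *\<^sub>R (S + d *\<^sub>R mat 1)) *v v = of_real c *s (S *v v) + of_real (c * d) *s v" for v :: "complex^'n"
    by (simp add: mv_scaleR matrix_vector_mult_add_rdistrib vec_eq_iff algebra_simps)
  have iff: "(c *\<^sub>R (S + d *\<^sub>R mat 1)) *v v = of_real k *s v \<longleftrightarrow> S *v v = of_real (k / c - d) *s v" for v k
  proof -
    have "(c *\<^sub>R (S + d *\<^sub>R mat 1)) *v v = of_real k *s v \<longleftrightarrow>
          (\<forall>i. of_real c * (S *v v) $ i + of_real (c * d) * v $ i = of_real k * v $ i)"
      by (simp add: mv vec_eq_iff)
    also have "\<dots> \<longleftrightarrow> (\<forall>i. (S *v v) $ i = of_real (k / c - d) * v $ i)"
      using assms by (auto simp: field_simps)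
    also have "\<dots> \<longleftrightarrow> S *v v = of_real (k / c - d) *s v" by (simp only: vec_eq_iff vector_smult_component)
    finally show ?thesis .
  qed
  show ?thesis
  proof (rule set_eqI)
    fix k
    have e: "k = c * ((k / c - d) + d)" using assms by simp
    have "k \<in> real_eigenvalues (c *\<^sub>R (S + d *\<^sub>R mat 1)) \<longleftrightarrow> k / c - d \<in> real_eigenvalues S"
      unfolding real_eigenvalues_def mem_Collect_eq iff by (rule refl)
    also have "\<dots> \<longleftrightarrow> k \<in> (\<lambda>l. c * (l + d)) ` real_eigenvalues S"
    proof
      assume "k / c - d \<in> real_eigenvalues S" then show "k \<in> (\<lambda>l. c * (l + d)) ` real_eigenvalues S"
        using e by blast
    next
      assume "k \<in> (\<lambda>l. c * (l + d)) ` real_eigenvalues S"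
      then obtain l where "l \<in> real_eigenvalues S" "k = c * (l + d)" by blast
      then show "k / c - d \<in> real_eigenvalues S" using assms by simp
    qed
    finally show "k \<in> real_eigenvalues (c *\<^sub>R (S + d *\<^sub>R mat 1)) \<longleftrightarrow> k \<in> (\<lambda>l. c * (l + d)) ` real_eigenvalues S" .
  qed
qed

lemma star_id:
  assumes P: "pos_def_mat S"
  shows "lambda_max (star_op (mat 1) S) = sqrt (lambda_max S) \<and>
         lambda_min (star_op (mat 1) S) = sqrt (lambda_min S)"
proof -
  have H: "hermitian_mat S" using P pos_def_mat_def by blast
  define a where "a = lambda_min S"
  define b where "b = lambda_max S"
  define E where "E = real_eigenvalues S"
  have aE: "a \<in> E" and bE: "b \<in> E" using lmin_props[OF H] lmax_props[OF H] a_def b_def E_def by auto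
  have fin: "finite E" using eig_finite[OF H] E_def by simp
  have ne: "E \<noteq> {}" using aE by blast
  have a0: "a > 0" and b0: "b > 0" using posdef_eig_pos[OF P] aE bE E_def by auto
  define c where "c = 1 / (sqrt a + sqrt b)"
  define d where "d = sqrt (a * b)"
  have c0: "c > 0" using a0 b0 c_def by (simp add: add_pos_pos)
  have st: "star_op (mat 1) S = c *\<^sub>R (S + d *\<^sub>R mat 1)"
    unfolding star_op_def Let_def matrix_inv_id matrix_mul_rid a_def b_def c_def d_def by (simp add: mult.commute)
  define g where "g l = c * (l + d)" for l
  have mono: "mono g" unfolding g_def using c0 by (intro monoI) (simp add: mult_left_mono)
  have eig: "real_eigenvalues (star_op (mat 1) S) = g ` E"
    unfolding st eig_affine[OF c0] g_def E_def by simp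
  have ga: "g a = sqrt a" and gb: "g b = sqrt b"
  proof -
    have sa: "a = sqrt a * sqrt a" and sb: "b = sqrt b * sqrt b" using a0 b0 by simp_all
    have d: "d = sqrt a * sqrt b" using d_def by (simp add: real_sqrt_mult)
    have pos: "sqrt a + sqrt b > 0" using a0 b0 by (simp add: add_pos_pos)
    show "g a = sqrt a" unfolding g_def c_def d using pos
      by (subst sa) (simp add: field_simps)
    show "g b = sqrt b" unfolding g_def c_def d using pos
      by (subst sb) (simp add: field_simps)
  qed
  have "lambda_max (star_op (mat 1) S) = Max (g ` E)"
    unfolding lambda_max_def eig ..
  also have "\<dots> = g (Max E)" by (rule mono_Max_commute[OF mono fin ne, symmetric])
  also have "Max E = b" unfolding E_def b_def lambda_max_def ..
  finally have "lambda_max (star_op (mat 1) S) = g b" .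
  moreover have "lambda_min (star_op (mat 1) S) = Min (g ` E)"
    unfolding lambda_min_def eig ..
  moreover have "Min (g ` E) = g (Min E)" by (rule mono_Min_commute[OF mono fin ne, symmetric])
  moreover have "Min E = a" unfolding E_def a_def lambda_min_def ..
  ultimately show ?thesis using ga gb a_def b_def by simp
qed

theorem proposition4:
  fixes S1 S2 :: "complex^'n^'n"
  assumes "pos_def_mat S1" and "pos_def_mat S2" and "loewner_le S1 S2"
  shows "lambda_max (star_op (mat 1) S1) \<le> lambda_max (star_op (mat 1) S2)
     \<and> lambda_min (star_op (mat 1) S1) \<le> lambda_min (star_op (mat 1) S2)"
proof -
  have H1: "hermitian_mat S1" and H2: "hermitian_mat S2" using assms pos_def_mat_def by auto
  have le: "Re (qform S1 x) \<le> Re (qform S2 x)" for x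
    using assms(3) unfolding loewner_le_def pos_semidef_mat_def by (auto simp: qform_diff)
  have "lambda_max S1 \<le> lambda_max S2"
  proof -
    obtain u where "norm u = 1" "Re (qform S1 u) = lambda_max S1"
      using eig_unit lmax_props[OF H1] by blast
    then show ?thesis using le[of u] lmax_props[OF H2] by force
  qed
  moreover have "lambda_min S1 \<le> lambda_min S2"
  proof -
    obtain u where "norm u = 1" "Re (qform S2 u) = lambda_min S2"
      using eig_unit lmin_props[OF H2] by blast
    then show ?thesis using le[of u] lmin_props[OF H1] by force
  qed
  ultimately show ?thesis using star_id[OF assms(1)] star_id[OF assms(2)] by simp
qed

end
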